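(* Let $z>0$ be an integer and $$\theta=-\log\frac{2q+h^{z/2}}{1+h^{z/2}}.$$ There exist $u_0>0$, $c_1>0$, $c_2>0$ such that for all $u\ge u_0$ and all $n\ge u^2$, $$c_1e^{-\theta u}\le\mathbf P(\Xi(\{0,z\},n)\ge u)\le\mathbf P(\Xi(\{0,z\},\infty)\ge u)\le c_2e^{-\theta u}.$$
   Context: Let $0<q<p<1$ with $p+q=1$ and $h=q/p$. Let $X_1,X_2,\dots$ be i.i.d. with $\mathbf P(X_1=1)=p$, $\mathbf P(X_1=-1)=q$, $S_0=0$, $S_n=X_1+\dots+X_n$. For $x\in\mathbb Z$, $n\ge1$, $\xi(x,n)=\#\{k:0<k\le n,\ S_k=x\}$, $\xi(x,\infty)=\lim_n\xi(x,n)$, and for $A\subset\mathbb Z$, $\Xi(A,n)=\sum_{x\in A}\xi(x,n)$ (also for $n=\infty$). *)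

theory Defs
  imports "HOL-Probability.Probability"
begin

text \<open>Steps are X 1, X 2, ... (X 0 is unused). Partial sums S_n = X_1 + ... + X_n.\<close>
definition walkS :: "(nat \<Rightarrow> 'a \<Rightarrow> int) \<Rightarrow> nat \<Rightarrow> 'a \<Rightarrow> int" where
  "walkS X n \<omega> = (\<Sum>k\<in>{1..n}. X k \<omega>)"

definition xi :: "(nat \<Rightarrow> 'a \<Rightarrow> int) \<Rightarrow> int \<Rightarrow> nat \<Rightarrow> 'a \<Rightarrow> nat" where
  "xi X x n \<omega> = card {k. 0 < k \<and> k \<le> n \<and> walkS X k \<omega> = x}"

definition xi_inf :: "(nat \<Rightarrow> 'a \<Rightarrow> int) \<Rightarrow> int \<Rightarrow> 'a \<Rightarrow> enat" where
  "xi_inf X x \<omega> = (SUP n. enat (xi X x n \<omega>))"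

definition Xi :: "(nat \<Rightarrow> 'a \<Rightarrow> int) \<Rightarrow> int set \<Rightarrow> nat \<Rightarrow> 'a \<Rightarrow> nat" where
  "Xi X A n \<omega> = (\<Sum>x\<in>A. xi X x n \<omega>)"

definition Xi_inf :: "(nat \<Rightarrow> 'a \<Rightarrow> int) \<Rightarrow> int set \<Rightarrow> 'a \<Rightarrow> enat" where
  "Xi_inf X A \<omega> = (\<Sum>x\<in>A. xi_inf X x \<omega>)"

end

theory Submission imports Defs begin


definition LL :: "nat \<Rightarrow> int list set" where
  "LL n = {xs. set xs \<subseteq> {-1,1} \<and> length xs = n}"

definition wt :: "real \<Rightarrow> real \<Rightarrow> int list \<Rightarrow> real" where
  "wt p q xs = prod_list (map (\<lambda>e. if e = 1 then p else q) xs)"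

lemma finite_LL: "finite (LL n)"
  unfolding LL_def by (rule finite_lists_length_eq) simp

lemma sum_LL_Suc:
  "(\<Sum>xs\<in>LL (Suc n). f xs) = (\<Sum>xs\<in>LL n. f (1#xs) + f ((-1)#xs))"
proof -
  have "(\<Sum>xs\<in>LL (Suc n). f xs) = (\<Sum>y\<in>LL n \<times> {-1,1}. f (snd y # fst y))"
    unfolding LL_def lists_length_Suc_eq
    by (subst sum.reindex) (auto simp: inj_split_Cons case_prod_beta)
  also have "\<dots> = (\<Sum>xs\<in>LL n. \<Sum>e\<in>{-1,1}. f (e#xs))"
    by (subst sum.cartesian_product) (simp add: case_prod_beta)
  also have "\<dots> = (\<Sum>xs\<in>LL n. f (1#xs) + f ((-1)#xs))"
    by (simp add: add.commute)
  finally show ?thesis .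
qed

lemma wt_Nil[simp]: "wt p q [] = 1" and wt_Cons[simp]: "wt p q (e#xs) = (if e = 1 then p else q) * wt p q xs"
  by (simp_all add: wt_def)

lemma wt_nonneg: "p \<ge> 0 \<Longrightarrow> q \<ge> 0 \<Longrightarrow> wt p q xs \<ge> 0"
  by (induction xs) auto

lemma sum_wt_powi:
  assumes "r \<noteq> 0"
  shows "(\<Sum>xs\<in>LL n. wt p q xs * r powi (sum_list xs)) = (p * r + q / r) ^ n"
proof (induction n)
  case 0
  have "LL 0 = {[]}" by (auto simp: LL_def)
  then show ?case by simp
next
  case (Suc n)
  have "(\<Sum>xs\<in>LL (Suc n). wt p q xs * r powi (sum_list xs))
     = (\<Sum>xs\<in>LL n. (p * r + q / r) * (wt p q xs * r powi (sum_list xs)))"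
    unfolding sum_LL_Suc using assms
    by (intro sum.cong refl) (simp add: power_int_add power_int_diff field_simps)
  also have "\<dots> = (p * r + q / r) ^ Suc n"
    by (simp add: sum_distrib_left[symmetric] Suc)
  finally show ?case .
qed

fun vis :: "int set \<Rightarrow> int list \<Rightarrow> nat" where
  "vis A [] = 0"
| "vis A (e#xs) = vis A xs + (if sum_list (e#xs) \<in> A then 1 else 0)"



definition Gf :: "real \<Rightarrow> nat \<Rightarrow> int \<Rightarrow> real" where
  "Gf r z x = (if x \<le> 0 then 1 else if x \<le> int z then (r^z + r^(2*nat x))/(1+r^z)
      else r^z * r^(2*nat(x - int z)))"

definition gf :: "real \<Rightarrow> real \<Rightarrow> nat \<Rightarrow> int \<Rightarrow> real" where
  "gf lam r z x = (if x = 0 \<or> x = int z then lam * Gf r z x else Gf r z x)"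

lemma Gf_mid: "r > 0 \<Longrightarrow> 0 \<le> x \<Longrightarrow> x \<le> int z \<Longrightarrow> Gf r z x = (r^z + r^(2*nat x))/(1+r^z)"
proof -
  assume r: "r > 0" and "0 \<le> x" "x \<le> int z"
  have "1 + r^z > 0" using r by (simp add: add_pos_pos)
  then show ?thesis using \<open>0 \<le> x\<close> \<open>x \<le> int z\<close> by (auto simp: Gf_def)
qed

lemma Gf_right: "r > 0 \<Longrightarrow> int z \<le> x \<Longrightarrow> Gf r z x = r^z * r^(2*nat(x - int z))"
proof -
  assume r: "r > 0" and x: "int z \<le> x"
  have pos: "1 + r^z > 0" using r by (simp add: add_pos_pos)
  show ?thesis
  proof (cases "x = int z")
    case True
    have "r^z + r^z * r^z = r^z * (1 + r^z)" by (simp add: algebra_simps)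
    moreover have "r^(2*z) = r^z * r^z" by (simp add: mult_2 power_add)
    ultimately show ?thesis using True r pos by (auto simp: Gf_def)
  next
    case False
    then show ?thesis using x by (auto simp: Gf_def)
  qed
qed

lemma harmonic:
  fixes p q r lam :: real and z :: nat
  assumes r: "r > 0" and pq: "p + q = 1" and h: "p * r^2 = q" and z: "z > 0"
    and lam: "lam = (2*q + r^z)/(1 + r^z)"
  shows "gf lam r z x = p * Gf r z (x+1) + q * Gf r z (x-1)"
proof -
  define s where "s = r^z"
  have s: "s > 0" using r by (simp add: s_def)
  have lam': "lam * (1+s) = 2*q + s" using lam s by (simp add: s_def field_simps)
  have p: "p = 1 - q" using pq by simp
  have key: "r^2 = q * r^2 + q" using h unfolding p by (simp add: left_diff_distrib)
  consider "x < 0" | "x = 0" | "0 < x \<and> x < int z" | "x = int z" | "x > int z" by linarith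
  then show ?thesis
  proof cases
    case 1 then show ?thesis using z pq by (auto simp: gf_def Gf_def)
  next
    case 2
    have g: "gf lam r z x = lam" using 2 by (simp add: gf_def Gf_def)
    have G1: "Gf r z (x+1) = (s + r^2)/(1+s)" using 2 z r by (subst Gf_mid) (auto simp: s_def)
    have G2: "Gf r z (x-1) = 1" using 2 by (simp add: Gf_def)
    have "(p * ((s + r^2)/(1+s)) + q) * (1+s) = p * s + p * r^2 + q + q * s"
      using s by (simp add: field_simps)
    also have "\<dots> = 2*q + s" using h unfolding p by (simp add: algebra_simps)
    finally have "lam * (1+s) = (p * ((s + r^2)/(1+s)) + q) * (1+s)" using lam' by simp
    then show ?thesis unfolding g G1 G2 using s by simp
  next
    case 3
    define j where "j = nat (x - 1)"
    have j: "x = int j + 1" "nat x = j + 1" using 3 by (auto simp: j_def)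
    have g: "gf lam r z x = (s + r^(2*j+2))/(1+s)" using 3 j r by (simp add: gf_def Gf_mid s_def)
    have n1: "2 * nat (x+1) = 2*j+4" "2 * nat (x - 1) = 2*j" using j by auto
    have G1: "Gf r z (x+1) = (s + r^(2*j+4))/(1+s)" using 3 r
      by (subst Gf_mid[OF r]) (simp_all only: s_def n1, linarith+)
    have G2: "Gf r z (x-1) = (s + r^(2*j))/(1+s)" using 3 r
      by (subst Gf_mid[OF r]) (simp_all only: s_def n1, linarith+)
    have e: "r^(2*j+2) = p * r^(2*j+4) + q * r^(2*j)"
    proof -
      have "p * r^(2*j+4) + q * r^(2*j) = r^(2*j) * ((p*r^2)*r^2 + q)" by (simp add: power_add algebra_simps)
      also have "\<dots> = r^(2*j) * r^2" using h key by (simp add: algebra_simps)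
      finally show ?thesis by (simp add: power_add power2_eq_square)
    qed
    have "p * (s + r^(2*j+4)) + q * (s + r^(2*j)) = (p+q) * s + (p * r^(2*j+4) + q * r^(2*j))"
      by (simp add: algebra_simps)
    then have "(s + r^(2*j+2)) = p * (s + r^(2*j+4)) + q * (s + r^(2*j))"
      using e pq by simp
    moreover have "p * ((s + r^(2*j+4))/(1+s)) + q * ((s + r^(2*j))/(1+s))
       = (p * (s + r^(2*j+4)) + q * (s + r^(2*j)))/(1+s)" by (simp add: add_divide_distrib distrib_left)
    ultimately show ?thesis unfolding g G1 G2 by simp
  next
    case 4
    then obtain j where j: "z = Suc j" using z by (cases z) auto
    have g: "gf lam r z x = lam * s" using 4 r by (simp add: gf_def Gf_right s_def)
    have G1: "Gf r z (x+1) = s * r^2" using 4 r by (subst Gf_right) (auto simp: s_def nat_add_distrib)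
    have G2: "Gf r z (x-1) = (s + r^(2*j))/(1+s)" using 4 j r
      by (subst Gf_mid) (auto simp: s_def)
    have e: "q * r^(2*j) = p * s * s"
    proof -
      have s2: "r^(2*j) = r^j * r^j" by (simp only: mult_2 power_add)
      have ss: "r^(Suc j) * r^(Suc j) = r^2 * r^(2*j)" unfolding s2 power2_eq_square power_Suc by (simp only: ac_simps)
      have "p * s * s = p * r^2 * r^(2*j)" unfolding s_def j using ss by (simp add: mult.assoc)
      then show ?thesis using h by simp
    qed
    have "lam * s * (1+s) = (p * (s * r^2) + q * ((s + r^(2*j))/(1+s))) * (1+s)"
    proof -
      have "lam * s * (1+s) = s * (lam * (1+s))" by (simp add: algebra_simps)
      also have "\<dots> = s * (2*q+s)" using lam' by simp
      also have "\<dots> = q * s * (1+s) + q * s + p * s * s" unfolding p by (simp add: algebra_simps)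
      also have "\<dots> = (p*r^2) * s * (1+s) + q * s + p * s * s" using h by simp
      also have "\<dots> = (p * (s * r^2) + q * ((s + r^(2*j))/(1+s))) * (1+s)"
        using s e by (simp add: field_simps)
      finally show ?thesis .
    qed
    then show ?thesis unfolding g G1 G2 using s by simp
  next
    case 5
    define j where "j = nat (x - int z - 1)"
    have j: "x = int z + int j + 1" "nat (x - int z) = j + 1" using 5 by (auto simp: j_def)
    have g: "gf lam r z x = s * r^(2*j+2)" using 5 j r by (simp add: gf_def Gf_right s_def nat_int_add)
    have n1: "2 * nat (x+1 - int z) = 2*j+4" "2 * nat (x - 1 - int z) = 2*j" using j by auto
    have G1: "Gf r z (x+1) = s * r^(2*j+4)" using 5 r
      by (subst Gf_right[OF r]) (linarith, simp only: s_def n1)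
    have G2: "Gf r z (x-1) = s * r^(2*j)" using 5 r
      by (subst Gf_right[OF r]) (linarith, simp only: s_def n1)
    have e: "r^(2*j+2) = p * r^(2*j+4) + q * r^(2*j)"
    proof -
      have "p * r^(2*j+4) + q * r^(2*j) = r^(2*j) * ((p*r^2)*r^2 + q)" by (simp add: power_add algebra_simps)
      also have "\<dots> = r^(2*j) * r^2" using h key by (simp add: algebra_simps)
      finally show ?thesis by (simp add: power_add power2_eq_square)
    qed
    show ?thesis unfolding g G1 G2 using e by (simp add: algebra_simps)
  qed
qed


fun Phi :: "real \<Rightarrow> real \<Rightarrow> nat \<Rightarrow> nat \<Rightarrow> int list \<Rightarrow> real" where
  "Phi lam r z m [] = gf lam r z 0"
| "Phi lam r z m (e#xs) = (if m \<le> vis {0,int z} xs then Phi lam r z m xs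
     else (1/lam)^(vis {0, int z} (e#xs)) * gf lam r z (sum_list (e#xs)))"

lemma Phi_lt: "vis {0,int z} xs < m \<Longrightarrow> Phi lam r z m xs = (1/lam)^(vis {0,int z} xs) * gf lam r z (sum_list xs)"
  by (cases xs) auto

lemma G_gf: "lam \<noteq> 0 \<Longrightarrow> (1/lam)^(if y \<in> {0, int z} then 1 else 0) * gf lam r z y = Gf r z y"
  by (auto simp: gf_def)

lemma Phi_step:
  fixes p q r lam :: real and z :: nat
  assumes r: "r > 0" and pq: "p + q = 1" and h: "p * r^2 = q" and z: "z > 0"
    and lam: "lam = (2*q + r^z)/(1 + r^z)" and lam0: "lam \<noteq> 0"
  shows "p * Phi lam r z m (1#xs) + q * Phi lam r z m ((-1)#xs) = Phi lam r z m xs"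
proof (cases "m \<le> vis {0,int z} xs")
  case True
  then show ?thesis using pq by (simp add: distrib_right[symmetric])
next
  case False
  define v where "v = vis {0,int z} xs"
  define x where "x = sum_list xs"
  have e: "Phi lam r z m (e#xs) = (1/lam)^v * Gf r z (x + e)" for e
  proof -
    have "Phi lam r z m (e#xs) = (1/lam)^v * ((1/lam)^(if x + e \<in> {0, int z} then 1 else 0) * gf lam r z (x+e))"
      using False by (simp add: v_def x_def power_add add.commute)
    then show ?thesis using G_gf[OF lam0] by simp
  qed
  have "Phi lam r z m xs = (1/lam)^v * gf lam r z x"
    using False by (simp add: Phi_lt v_def x_def)
  also have "\<dots> = (1/lam)^v * (p * Gf r z (x+1) + q * Gf r z (x-1))"
    using harmonic[OF r pq h z lam] by simp
  finally show ?thesis unfolding e by (simp add: algebra_simps)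
qed

lemma sum_Phi:
  fixes p q r lam :: real and z :: nat
  assumes r: "r > 0" and pq: "p + q = 1" and h: "p * r^2 = q" and z: "z > 0"
    and lam: "lam = (2*q + r^z)/(1 + r^z)" and lam0: "lam \<noteq> 0"
  shows "(\<Sum>xs\<in>LL n. wt p q xs * Phi lam r z m xs) = gf lam r z 0"
proof (induction n)
  case 0
  have "LL 0 = {[]}" by (auto simp: LL_def)
  then show ?case by simp
next
  case (Suc n)
  have "(\<Sum>xs\<in>LL (Suc n). wt p q xs * Phi lam r z m xs)
      = (\<Sum>xs\<in>LL n. wt p q xs * (p * Phi lam r z m (1#xs) + q * Phi lam r z m ((-1)#xs)))"
    unfolding sum_LL_Suc by (intro sum.cong refl) (simp add: algebra_simps)
  also have "\<dots> = (\<Sum>xs\<in>LL n. wt p q xs * Phi lam r z m xs)"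
    using Phi_step[OF assms] by simp
  finally show ?case using Suc by simp
qed

lemma vis_Cons_le: "vis A (e#xs) \<le> vis A xs + 1"
  by simp

lemma Phi_ge: "m \<le> vis {0,int z} xs \<Longrightarrow> \<exists>y\<in>{0, int z}. Phi lam r z m xs = (1/lam)^m * gf lam r z y"
proof (induction xs)
  case Nil
  then show ?case by auto
next
  case (Cons e xs)
  show ?case
  proof (cases "m \<le> vis {0,int z} xs")
    case True
    then show ?thesis using Cons by simp
  next
    case False
    then have "vis {0,int z} (e#xs) = m" "sum_list (e#xs) \<in> {0, int z}"
      using Cons.prems by (auto split: if_splits)
    then show ?thesis using False by (intro bexI[of _ "sum_list (e#xs)"]) auto
  qed
qed

lemma Gf_pos: "r > 0 \<Longrightarrow> Gf r z x > 0"
  by (auto simp: Gf_def intro!: divide_pos_pos add_pos_pos)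

lemma gf_nonneg: "r > 0 \<Longrightarrow> lam \<ge> 0 \<Longrightarrow> gf lam r z x \<ge> 0"
  using Gf_pos[of r z x] by (auto simp: gf_def)

lemma Phi_nonneg: assumes "r > 0" "lam \<ge> 0" shows "Phi lam r z m xs \<ge> 0"
proof (induction xs)
  case Nil then show ?case using gf_nonneg[OF assms] by simp
next
  case (Cons e xs)
  have "0 \<le> (1/lam)^k * gf lam r z y" for k y using assms by (intro mult_nonneg_nonneg zero_le_power gf_nonneg) auto
  then show ?case using Cons by (simp only: Phi.simps split: if_split) blast
qed

lemma Gf_0: "Gf r z 0 = 1" by (simp add: Gf_def)
lemma Gf_z: "r > 0 \<Longrightarrow> Gf r z (int z) = r^z" by (simp add: Gf_right)

lemma Gf_le:
  assumes r: "0 < r" "r < 1"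
  shows "Gf r z x \<le> r powi x / r^z"
proof -
  have rz: "0 < r^z" "r^z \<le> 1" using r by (auto simp: power_le_one)
  consider "x \<le> 0" | "0 < x \<and> x \<le> int z" | "int z < x" by linarith
  then show ?thesis
  proof cases
    case 1
    have "1 \<le> r powi x"
    proof -
      have "r powi x = (1/r) ^ nat (-x)" using 1 r
        by (simp add: power_int_def power_one_over inverse_eq_divide)
      moreover have "1 \<le> (1/r) ^ nat (-x)" using r by (intro one_le_power) simp
      ultimately show ?thesis by simp
    qed
    also have "r powi x \<le> r powi x / r^z" using rz \<open>1 \<le> r powi x\<close>
      by (simp add: le_divide_eq mult_left_le)
    finally show ?thesis using 1 by (simp add: Gf_def)
  next
    case 2
    have "Gf r z x = (r^z + r^(2*nat x))/(1+r^z)" using 2 r by (simp add: Gf_def)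
    also have "\<dots> \<le> 1"
    proof -
      have "r^(2*nat x) \<le> 1" using r by (simp add: power_le_one)
      then show ?thesis using rz by (simp add: divide_le_eq_1)
    qed
    also have "1 \<le> r powi x / r^z"
    proof -
      have "r powi x = r ^ nat x" using 2 by (simp add: power_int_def)
      moreover have "r ^ z \<le> r ^ nat x" using 2 r by (intro power_decreasing) auto
      ultimately show ?thesis using rz by simp
    qed
    finally show ?thesis .
  next
    case 3
    define k where "k = nat (x - int z)"
    have "Gf r z x = r^z * r^(2*k)" using 3 r by (simp add: Gf_right k_def)
    also have "\<dots> \<le> r^k"
    proof -
      have "r^(2*k) \<le> r^k" using r by (intro power_decreasing) auto
      then have "r^z * r^(2*k) \<le> 1 * r^k" using rz r by (intro mult_mono) auto
      then show ?thesis by simp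
    qed
    also have "r^k = r powi x / r^z"
    proof -
      have "nat x = z + k" using 3 by (simp add: k_def)
      then have "r powi x = r^z * r^k" using 3 by (simp add: power_int_def power_add)
      then show ?thesis using rz r by simp
    qed
    finally show ?thesis .
  qed
qed



lemma sum_split_P:
  assumes "finite S"
  shows "(\<Sum>x\<in>S. f x) = (\<Sum>x\<in>{x\<in>S. P x}. f x) + (\<Sum>x\<in>{x\<in>S. \<not> P x}. f x)"
proof -
  have "S = {x\<in>S. P x} \<union> {x\<in>S. \<not> P x}" by auto
  then have "(\<Sum>x\<in>S. f x) = (\<Sum>x\<in>{x\<in>S. P x} \<union> {x\<in>S. \<not> P x}. f x)" by simp
  also have "\<dots> = (\<Sum>x\<in>{x\<in>S. P x}. f x) + (\<Sum>x\<in>{x\<in>S. \<not> P x}. f x)"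
    using assms by (intro sum.union_disjoint) auto
  finally show ?thesis .
qed

locale walkpar =
  fixes p q r lam :: real and z :: nat
  assumes r: "0 < r" "r < 1" and pq: "p + q = 1" and h: "p * r^2 = q" and z: "z > 0"
    and lam: "lam = (2*q + r^z)/(1 + r^z)" and lampos: "0 < lam" and lam1: "lam \<le> 1"
    and p0: "0 < p" and q0: "0 < q"
begin

lemma gf_A: "y \<in> {0, int z} \<Longrightarrow> lam * r^z \<le> gf lam r z y \<and> gf lam r z y \<le> lam"
proof -
  assume y: "y \<in> {0, int z}"
  have rz: "0 < r^z" "r^z \<le> 1" using r by (auto simp: power_le_one)
  show ?thesis
  proof (cases "y = 0")
    case True
    then show ?thesis using rz lampos by (simp add: gf_def Gf_0 mult_left_le)
  next
    case False
    then have "y = int z" using y by auto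
    then show ?thesis using rz lampos r z by (simp add: gf_def Gf_z mult_left_le)
  qed
qed

lemma comb_upper: "(\<Sum>xs\<in>{xs\<in>LL n. m \<le> vis {0,int z} xs}. wt p q xs) \<le> lam^m / r^z"
proof -
  let ?S = "{xs\<in>LL n. m \<le> vis {0,int z} xs}"
  have fin: "finite ?S" using finite_LL by auto
  have rz: "0 < r^z" using r by simp
  have "(\<Sum>xs\<in>?S. wt p q xs) * ((1/lam)^m * (lam * r^z)) = (\<Sum>xs\<in>?S. wt p q xs * ((1/lam)^m * (lam * r^z)))"
    by (simp add: sum_distrib_right)
  also have "\<dots> \<le> (\<Sum>xs\<in>?S. wt p q xs * Phi lam r z m xs)"
  proof (intro sum_mono mult_left_mono)
    fix xs assume "xs \<in> ?S"
    then obtain y where y: "y \<in> {0, int z}" "Phi lam r z m xs = (1/lam)^m * gf lam r z y"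
      using Phi_ge by blast
    show "(1/lam)^m * (lam * r^z) \<le> Phi lam r z m xs"
      unfolding y(2) using gf_A[OF y(1)] lampos by (intro mult_left_mono) auto
    show "0 \<le> wt p q xs" using p0 q0 by (intro wt_nonneg) auto
  qed
  also have "\<dots> \<le> (\<Sum>xs\<in>LL n. wt p q xs * Phi lam r z m xs)"
    using finite_LL p0 q0 r lampos
    by (intro sum_mono2) (auto intro!: mult_nonneg_nonneg wt_nonneg Phi_nonneg)
  also have "\<dots> = gf lam r z 0"
    using sum_Phi[OF r(1) pq h z lam] lampos by simp
  also have "\<dots> = lam" by (simp add: gf_def Gf_0)
  finally have *: "(\<Sum>xs\<in>?S. wt p q xs) * ((1/lam)^m * (lam * r^z)) \<le> lam" .
  have pos: "0 < (1/lam)^m * (lam * r^z)" using lampos rz by simp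
  have "(\<Sum>xs\<in>?S. wt p q xs) \<le> lam / ((1/lam)^m * (lam * r^z))"
    using * pos_le_divide_eq[OF pos] by blast
  also have "\<dots> = lam^m / r^z" using lampos rz by (simp add: field_simps power_one_over)
  finally show ?thesis .
qed

lemma comb_lower:
  "lam \<le> (1/lam)^m * lam * (\<Sum>xs\<in>{xs\<in>LL n. m \<le> vis {0,int z} xs}. wt p q xs)
          + (1/lam)^m * (p * r + q / r)^n / r^z"
proof -
  let ?S = "{xs\<in>LL n. m \<le> vis {0,int z} xs}"
  let ?T = "{xs\<in>LL n. \<not> m \<le> vis {0,int z} xs}"
  have rz: "0 < r^z" using r by simp
  have wt0: "0 \<le> wt p q xs" for xs using p0 q0 by (intro wt_nonneg) auto
  have il: "1 \<le> 1/lam" using lampos lam1 by simp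
  have "lam = gf lam r z 0" by (simp add: gf_def Gf_0)
  also have "\<dots> = (\<Sum>xs\<in>LL n. wt p q xs * Phi lam r z m xs)"
    using sum_Phi[OF r(1) pq h z lam] lampos by simp
  also have "\<dots> = (\<Sum>xs\<in>?S. wt p q xs * Phi lam r z m xs) + (\<Sum>xs\<in>?T. wt p q xs * Phi lam r z m xs)"
    by (rule sum_split_P[OF finite_LL])
  also have "(\<Sum>xs\<in>?S. wt p q xs * Phi lam r z m xs) \<le> (\<Sum>xs\<in>?S. wt p q xs * ((1/lam)^m * lam))"
  proof (intro sum_mono mult_left_mono wt0)
    fix xs assume "xs \<in> ?S"
    then obtain y where y: "y \<in> {0, int z}" "Phi lam r z m xs = (1/lam)^m * gf lam r z y"
      using Phi_ge by blast
    show "Phi lam r z m xs \<le> (1/lam)^m * lam"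
      unfolding y(2) using gf_A[OF y(1)] lampos by (intro mult_left_mono) auto
  qed
  also have "(\<Sum>xs\<in>?T. wt p q xs * Phi lam r z m xs) \<le> (\<Sum>xs\<in>?T. wt p q xs * ((1/lam)^m * (r powi sum_list xs / r^z)))"
  proof (intro sum_mono mult_left_mono wt0)
    fix xs assume "xs \<in> ?T"
    then have v: "vis {0,int z} xs < m" by auto
    have "Phi lam r z m xs = (1/lam)^(vis {0,int z} xs) * gf lam r z (sum_list xs)"
      using Phi_lt[OF v] .
    also have "\<dots> \<le> (1/lam)^m * (r powi sum_list xs / r^z)"
    proof (intro mult_mono)
      show "(1/lam)^(vis {0,int z} xs) \<le> (1/lam)^m" using il v by (intro power_increasing) auto
      have "gf lam r z (sum_list xs) \<le> Gf r z (sum_list xs)"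
        using Gf_pos[OF r(1), of z "sum_list xs"] lam1 by (auto simp: gf_def mult_left_le_one_le)
      also have "\<dots> \<le> r powi sum_list xs / r^z" by (rule Gf_le[OF r])
      finally show "gf lam r z (sum_list xs) \<le> r powi sum_list xs / r^z" .
      show "0 \<le> (1/lam)^m" using lampos by simp
      show "0 \<le> gf lam r z (sum_list xs)" using r lampos by (intro gf_nonneg) auto
    qed
    finally show "Phi lam r z m xs \<le> (1/lam)^m * (r powi sum_list xs / r^z)" .
  qed
  also have "(\<Sum>xs\<in>?T. wt p q xs * ((1/lam)^m * (r powi sum_list xs / r^z)))
     \<le> (\<Sum>xs\<in>LL n. wt p q xs * ((1/lam)^m * (r powi sum_list xs / r^z)))"
    using finite_LL r lampos
    by (intro sum_mono2) (auto intro!: mult_nonneg_nonneg wt0 divide_nonneg_pos)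
  also have "\<dots> = (1/lam)^m / r^z * (\<Sum>xs\<in>LL n. wt p q xs * r powi sum_list xs)"
    by (simp add: sum_distrib_left algebra_simps)
  also have "\<dots> = (1/lam)^m * (p * r + q / r)^n / r^z"
    using sum_wt_powi[of r p q n] r by simp
  also have "(\<Sum>xs\<in>?S. wt p q xs * ((1/lam)^m * lam)) = (1/lam)^m * lam * (\<Sum>xs\<in>?S. wt p q xs)"
    by (simp add: sum_distrib_left algebra_simps)
  finally show ?thesis by simp
qed

end


primrec tr :: "(nat \<Rightarrow> 'a \<Rightarrow> int) \<Rightarrow> nat \<Rightarrow> 'a \<Rightarrow> int list" where
  "tr X 0 \<omega> = []"
| "tr X (Suc n) \<omega> = X (Suc n) \<omega> # tr X n \<omega>"

lemma length_tr[simp]: "length (tr X n \<omega>) = n"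
  by (induction n) auto

lemma nth_tr: "i < n \<Longrightarrow> tr X n \<omega> ! i = X (n - i) \<omega>"
proof (induction n arbitrary: i)
  case 0 then show ?case by simp
next
  case (Suc n) then show ?case by (cases i) auto
qed

lemma tr_eq_iff: "tr X n \<omega> = xs \<longleftrightarrow> length xs = n \<and> (\<forall>j\<in>{1..n}. X j \<omega> = xs ! (n - j))"
proof
  assume "tr X n \<omega> = xs"
  then show "length xs = n \<and> (\<forall>j\<in>{1..n}. X j \<omega> = xs ! (n - j))"
    using nth_tr[of "n - j" n X \<omega> for j] by auto
next
  assume a: "length xs = n \<and> (\<forall>j\<in>{1..n}. X j \<omega> = xs ! (n - j))"
  show "tr X n \<omega> = xs"
  proof (rule nth_equalityI)
    show "length (tr X n \<omega>) = length xs" using a by simp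
    fix i assume "i < length (tr X n \<omega>)"
    then have i: "i < n" by simp
    then have "n - (n - i) = i" "n - i \<in> {1..n}" by auto
    then show "tr X n \<omega> ! i = xs ! i" using a i by (metis nth_tr)
  qed
qed

lemma set_tr: "set (tr X n \<omega>) = (\<lambda>j. X j \<omega>) ` {1..n}"
  by (induction n) (auto simp: atLeastAtMostSuc_conv)

lemma walkS_Suc: "walkS X (Suc n) \<omega> = X (Suc n) \<omega> + walkS X n \<omega>"
  by (simp add: walkS_def)

lemma sum_tr: "sum_list (tr X n \<omega>) = walkS X n \<omega>"
  by (induction n) (auto simp: walkS_def)

lemma xi_Suc: "xi X x (Suc n) \<omega> = xi X x n \<omega> + (if walkS X (Suc n) \<omega> = x then 1 else 0)"
proof -
  have "{k. 0 < k \<and> k \<le> Suc n \<and> walkS X k \<omega> = x}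
      = {k. 0 < k \<and> k \<le> n \<and> walkS X k \<omega> = x} \<union> (if walkS X (Suc n) \<omega> = x then {Suc n} else {})"
    by (auto simp: le_Suc_eq)
  moreover have "finite {k. 0 < k \<and> k \<le> n \<and> walkS X k \<omega> = x}" by auto
  ultimately show ?thesis unfolding xi_def by auto
qed

lemma vis_tr: "z > 0 \<Longrightarrow> vis {0, int z} (tr X n \<omega>) = Xi X {0, int z} n \<omega>"
proof (induction n)
  case 0
  have "{k::nat. 0 < k \<and> k \<le> 0 \<and> Q k} = {}" for Q by auto
  then show ?case by (auto simp: Xi_def xi_def)
next
  case (Suc n)
  then show ?case by (auto simp: Xi_def xi_Suc sum_tr walkS_Suc)
qed

lemma prod_nth_rev: "(\<Prod>j\<in>{1..length xs}. f (xs ! (length xs - j))) = prod_list (map f xs)"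
proof (induction xs)
  case Nil then show ?case by simp
next
  case (Cons e xs)
  have "(\<Prod>j\<in>{1..Suc (length xs)}. f ((e#xs) ! (Suc (length xs) - j)))
      = (\<Prod>j\<in>{1..length xs}. f ((e#xs) ! (Suc (length xs) - j))) * f e"
    by (simp add: prod.cl_ivl_Suc)
  also have "(\<Prod>j\<in>{1..length xs}. f ((e#xs) ! (Suc (length xs) - j))) = (\<Prod>j\<in>{1..length xs}. f (xs ! (length xs - j)))"
    by (intro prod.cong refl) (simp add: Suc_diff_le)
  finally show ?case using Cons by (simp add: mult.commute)
qed

locale rwalk = prob_space M for M :: "'a measure" +
  fixes X :: "nat \<Rightarrow> 'a \<Rightarrow> int" and p q :: real
  assumes meas: "\<And>i. X i \<in> measurable M (count_space UNIV)"
    and ind: "indep_vars (\<lambda>_. count_space UNIV) X {1..}"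
    and P1: "\<And>i. i \<ge> 1 \<Longrightarrow> measure M {\<omega> \<in> space M. X i \<omega> = 1} = p"
    and Pm1: "\<And>i. i \<ge> 1 \<Longrightarrow> measure M {\<omega> \<in> space M. X i \<omega> = -1} = q"
    and pq: "p + q = 1"
begin

lemma ev_X: "{\<omega> \<in> space M. X i \<omega> = a} \<in> events"
  using measurable_sets[OF meas, of "{a}" i] by (simp add: vimage_def Int_def conj_commute)

lemma tr_meas: "tr X n \<in> measurable M (count_space UNIV)"
proof (induction n)
  case 0 then show ?case by simp
next
  case (Suc n)
  have "(\<lambda>\<omega>. X (Suc n) \<omega> # tr X n \<omega>) \<in> measurable M (count_space UNIV)"
  proof (subst measurable_count_space_eq2_countable, intro conjI ballI)
    show "(\<lambda>\<omega>. X (Suc n) \<omega> # tr X n \<omega>) \<in> space M \<rightarrow> UNIV" by simp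
    fix a :: "int list"
    show "(\<lambda>\<omega>. X (Suc n) \<omega> # tr X n \<omega>) -` {a} \<inter> space M \<in> events"
    proof (cases a)
      case Nil
      then have "(\<lambda>\<omega>. X (Suc n) \<omega> # tr X n \<omega>) -` {a} \<inter> space M = {}" by auto
      then show ?thesis by simp
    next
      case (Cons b ys)
      have "(\<lambda>\<omega>. X (Suc n) \<omega> # tr X n \<omega>) -` {a} \<inter> space M
          = {\<omega> \<in> space M. X (Suc n) \<omega> = b} \<inter> (tr X n -` {ys} \<inter> space M)"
        using Cons by auto
      moreover have "tr X n -` {ys} \<inter> space M \<in> events"
        using measurable_sets[OF Suc, of "{ys}"] by simp
      ultimately show ?thesis using ev_X by auto
    qed
  qed
  then show ?case by simp
qed

lemma ev_tr: "{\<omega> \<in> space M. P (tr X n \<omega>)} \<in> events"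
proof -
  have "{\<omega> \<in> space M. P (tr X n \<omega>)} = tr X n -` {xs. P xs} \<inter> space M" by auto
  then show ?thesis using measurable_sets[OF tr_meas, of "{xs. P xs}" n] by simp
qed

lemma prob_X: "i \<ge> 1 \<Longrightarrow> a \<in> {-1, 1} \<Longrightarrow> prob {\<omega> \<in> space M. X i \<omega> = a} = (if a = 1 then p else q)"
  using P1 Pm1 by auto

lemma prob_tr: assumes xs: "xs \<in> LL n" shows "prob {\<omega> \<in> space M. tr X n \<omega> = xs} = wt p q xs"
proof (cases "n = 0")
  case True
  then have "xs = []" using xs by (simp add: LL_def)
  then show ?thesis using True by (simp add: prob_space)
next
  case False
  have len: "length xs = n" and set: "set xs \<subseteq> {-1,1}" using xs by (auto simp: LL_def)
  define A where "A j = {\<omega> \<in> space M. X j \<omega> = xs ! (n - j)}" for j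
  have eq: "{\<omega> \<in> space M. tr X n \<omega> = xs} = (\<Inter>j\<in>{1..n}. A j)"
  proof -
    have one: "Suc 0 \<in> {1..n}" using False by simp
    show ?thesis using len one by (auto simp: A_def tr_eq_iff)
  qed
  have indS: "indep_sets (\<lambda>i. {X i -` B \<inter> space M | B. B \<in> sets (count_space UNIV)}) {1..}"
    using ind unfolding indep_vars_def2 by simp
  have "prob (\<Inter>j\<in>{1..n}. A j) = (\<Prod>j\<in>{1..n}. prob (A j))"
  proof (rule indep_setsD[OF indS])
    show "{1..n} \<subseteq> {1..}" by auto
    show "{1..n} \<noteq> {}" using False by simp
    show "finite {1..n}" by simp
    show "\<forall>j\<in>{1..n}. A j \<in> {X j -` B \<inter> space M | B. B \<in> sets (count_space UNIV)}"
      by (auto simp: A_def intro!: exI[of _ "{xs ! (n - j)}" for j])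
  qed
  also have "\<dots> = (\<Prod>j\<in>{1..n}. (\<lambda>e. if e = 1 then p else q) (xs ! (n - j)))"
  proof (intro prod.cong refl)
    fix j assume j: "j \<in> {1..n}"
    then have "xs ! (n - j) \<in> set xs" using len by (intro nth_mem) auto
    then have "xs ! (n - j) \<in> {-1,1}" using set by blast
    then show "prob (A j) = (if xs ! (n - j) = 1 then p else q)"
      unfolding A_def using prob_X[of j "xs ! (n-j)"] j by auto
  qed
  also have "\<dots> = wt p q xs" using prod_nth_rev[of "\<lambda>e. if e = 1 then p else q" xs] len
    by (simp add: wt_def)
  finally show ?thesis using eq by simp
qed

lemma null_X: "i \<ge> 1 \<Longrightarrow> {\<omega> \<in> space M. X i \<omega> \<notin> {-1, 1}} \<in> null_sets M"
proof -
  assume i: "i \<ge> 1"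
  let ?B = "{\<omega> \<in> space M. X i \<omega> = 1} \<union> {\<omega> \<in> space M. X i \<omega> = -1}"
  have disj: "{\<omega> \<in> space M. X i \<omega> = 1} \<inter> {\<omega> \<in> space M. X i \<omega> = -1} = {}" by auto
  have "prob ?B = p + q"
    using finite_measure_Union[OF ev_X ev_X disj] P1[OF i] Pm1[OF i] by simp
  then have "prob (space M - ?B) = 0" using pq ev_X by (simp add: prob_compl)
  moreover have "space M - ?B = {\<omega> \<in> space M. X i \<omega> \<notin> {-1, 1}}" by auto
  moreover have "space M - ?B \<in> events" using ev_X by auto
  ultimately show ?thesis by (metis (no_types, lifting) emeasure_eq_measure ennreal_0 null_setsI)
qed

lemma null_tr: "{\<omega> \<in> space M. tr X n \<omega> \<notin> LL n} \<in> null_sets M"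
proof -
  have "{\<omega> \<in> space M. tr X n \<omega> \<notin> LL n} = (\<Union>j\<in>{1..n}. {\<omega> \<in> space M. X j \<omega> \<notin> {-1, 1}})"
    by (auto simp: LL_def set_tr)
  also have "\<dots> \<in> null_sets M" by (intro null_sets_UN' null_X) auto
  finally show ?thesis .
qed

lemma prob_event: "prob {\<omega> \<in> space M. P (tr X n \<omega>)} = (\<Sum>xs\<in>{xs\<in>LL n. P xs}. wt p q xs)"
proof -
  let ?U = "(\<Union>xs\<in>{xs\<in>LL n. P xs}. {\<omega> \<in> space M. tr X n \<omega> = xs})"
  let ?N = "{\<omega> \<in> space M. P (tr X n \<omega>) \<and> tr X n \<omega> \<notin> LL n}"
  have evs: "{\<omega> \<in> space M. tr X n \<omega> = xs} \<in> events" for xs using ev_tr[of "\<lambda>ys. ys = xs" n] by simp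
  have eq: "{\<omega> \<in> space M. P (tr X n \<omega>)} = ?U \<union> ?N" by blast
  have Nn: "?N \<in> null_sets M"
  proof (rule null_sets_subset[OF null_tr])
    show "?N \<in> events" using ev_tr[of "\<lambda>ys. P ys \<and> ys \<notin> LL n" n] by simp
    show "?N \<subseteq> {\<omega> \<in> space M. tr X n \<omega> \<notin> LL n}" by blast
  qed
  have Uev: "?U \<in> events"
    using finite_LL evs by (intro sets.finite_UN) auto
  have "prob {\<omega> \<in> space M. P (tr X n \<omega>)} = prob ?U"
    unfolding eq by (rule measure_Un_null_set[OF Uev Nn])
  also have "\<dots> = (\<Sum>xs\<in>{xs\<in>LL n. P xs}. prob {\<omega> \<in> space M. tr X n \<omega> = xs})"
  proof (rule finite_measure_finite_Union)
    show "finite {xs\<in>LL n. P xs}" using finite_LL by simp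
    show "(\<lambda>xs. {\<omega> \<in> space M. tr X n \<omega> = xs}) ` {xs\<in>LL n. P xs} \<subseteq> events" using evs by blast
    show "disjoint_family_on (\<lambda>xs. {\<omega> \<in> space M. tr X n \<omega> = xs}) {xs\<in>LL n. P xs}"
      unfolding disjoint_family_on_def by blast
  qed
  also have "\<dots> = (\<Sum>xs\<in>{xs\<in>LL n. P xs}. wt p q xs)"
    by (intro sum.cong refl prob_tr) auto
  finally show ?thesis .
qed

end


lemma xi_mono: "n \<le> n' \<Longrightarrow> xi X x n \<omega> \<le> xi X x n' \<omega>"
  unfolding xi_def by (intro card_mono) (auto intro: finite_subset[of _ "{..n'}"])

lemma sup_reach: fixes f :: "nat \<Rightarrow> nat" shows "enat k \<le> (SUP n. enat (f n)) \<Longrightarrow> \<exists>n. k \<le> f n"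
proof (cases "k = 0")
  case True then show ?thesis by auto
next
  case False
  assume a: "enat k \<le> (SUP n. enat (f n))"
  have "enat (k - 1) < enat k" using False by simp
  then have "enat (k - 1) < (SUP n. enat (f n))" using a by (rule less_le_trans)
  then obtain n where "enat (k - 1) < enat (f n)" by (auto simp: less_SUP_iff)
  then have "k \<le> f n" using False by simp
  then show ?thesis by blast
qed

lemma two_reach:
  fixes f g :: "nat \<Rightarrow> nat"
  assumes a: "enat m \<le> (SUP n. enat (f n)) + (SUP n. enat (g n))" and f: "mono f" and g: "mono g"
  shows "\<exists>n. m \<le> f n + g n"
proof (cases "enat m \<le> (SUP n. enat (f n))")
  case True
  then obtain n where "m \<le> f n" using sup_reach by blast
  then show ?thesis by (intro exI[of _ n]) simp
next
  case False
  then obtain k where k: "(SUP n. enat (f n)) = enat k" "k < m"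
    by (cases "(SUP n. enat (f n))") auto
  have "enat (m - k) \<le> (SUP n. enat (g n))"
  proof (cases "(SUP n. enat (g n))")
    case (enat j)
    then show ?thesis using a k by simp
  next
    case infinity then show ?thesis by simp
  qed
  then obtain n2 where n2: "m - k \<le> g n2" using sup_reach by blast
  obtain n1 where n1: "k \<le> f n1" using sup_reach[of k f] k by auto
  have "f n1 \<le> f (max n1 n2)" using f by (rule monoD) (rule max.cobounded1)
  moreover have "g n2 \<le> g (max n1 n2)" using g by (rule monoD) (rule max.cobounded2)
  ultimately show ?thesis using n1 n2 by (intro exI[of _ "max n1 n2"]) simp
qed

lemma Xi_two: "z > 0 \<Longrightarrow> Xi X {0, int z} n \<omega> = xi X 0 n \<omega> + xi X (int z) n \<omega>"
  by (simp add: Xi_def)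

lemma Xi_inf_two: "z > 0 \<Longrightarrow> Xi_inf X {0, int z} \<omega> = xi_inf X 0 \<omega> + xi_inf X (int z) \<omega>"
  by (simp add: Xi_inf_def)

lemma Xi_le_inf: "z > 0 \<Longrightarrow> enat (Xi X {0, int z} n \<omega>) \<le> Xi_inf X {0, int z} \<omega>"
proof -
  assume z: "z > 0"
  have "enat (xi X x n \<omega>) \<le> xi_inf X x \<omega>" for x unfolding xi_inf_def by (rule SUP_upper) simp
  then have "enat (xi X 0 n \<omega>) + enat (xi X (int z) n \<omega>) \<le> xi_inf X 0 \<omega> + xi_inf X (int z) \<omega>"
    by (intro add_mono)
  then show ?thesis unfolding Xi_two[OF z] Xi_inf_two[OF z] by simp
qed

lemma ereal_enat_ge: "ereal u \<le> ereal_of_enat e \<Longrightarrow> enat (nat \<lceil>u\<rceil>) \<le> e"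
proof (cases e)
  case (enat k)
  assume "ereal u \<le> ereal_of_enat e"
  then have "u \<le> real k" using enat by simp
  then have "nat \<lceil>u\<rceil> \<le> k" by (simp add: ceiling_le_iff nat_le_iff)
  then show ?thesis using enat by simp
next
  case infinity then show ?thesis by simp
qed

lemma inf_event:
  assumes z: "z > 0" and u: "u > 0"
  shows "ereal u \<le> ereal_of_enat (Xi_inf X {0, int z} \<omega>) \<longleftrightarrow> (\<exists>n. nat \<lceil>u\<rceil> \<le> Xi X {0, int z} n \<omega>)"
proof
  assume "ereal u \<le> ereal_of_enat (Xi_inf X {0, int z} \<omega>)"
  then have "enat (nat \<lceil>u\<rceil>) \<le> xi_inf X 0 \<omega> + xi_inf X (int z) \<omega>"
    using ereal_enat_ge Xi_inf_two[OF z] by metis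
  then have "\<exists>n. nat \<lceil>u\<rceil> \<le> xi X 0 n \<omega> + xi X (int z) n \<omega>"
    unfolding xi_inf_def by (rule two_reach) (auto intro!: monoI xi_mono)
  then show "\<exists>n. nat \<lceil>u\<rceil> \<le> Xi X {0, int z} n \<omega>" using Xi_two[OF z] by metis
next
  assume "\<exists>n. nat \<lceil>u\<rceil> \<le> Xi X {0, int z} n \<omega>"
  then obtain n where n: "nat \<lceil>u\<rceil> \<le> Xi X {0, int z} n \<omega>" by blast
  have "u \<le> real (nat \<lceil>u\<rceil>)" by linarith
  also have "\<dots> \<le> real (Xi X {0, int z} n \<omega>)" using n by simp
  finally have "ereal u \<le> ereal_of_enat (enat (Xi X {0, int z} n \<omega>))" by simp
  also have "\<dots> \<le> ereal_of_enat (Xi_inf X {0, int z} \<omega>)"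
    using Xi_le_inf[OF z, of X n \<omega>] by (simp only: ereal_of_enat_le_iff)
  finally show "ereal u \<le> ereal_of_enat (Xi_inf X {0, int z} \<omega>)" .
qed

lemma fin_event:
  assumes u: "u > 0"
  shows "u \<le> real k \<longleftrightarrow> nat \<lceil>u\<rceil> \<le> k"
  using u by (simp add: ceiling_le_iff nat_le_iff)



theorem lemma5p1:
  fixes M :: "'a measure" and X :: "nat \<Rightarrow> 'a \<Rightarrow> int"
    and p q :: real and z :: nat
  assumes "prob_space M"
    and "0 < q" "q < p" "p < 1" "p + q = 1"
    and "\<And>i. X i \<in> measurable M (count_space UNIV)"
    and "prob_space.indep_vars M (\<lambda>_. count_space UNIV) X {1..}"
    and "\<And>i. i \<ge> 1 \<Longrightarrow> measure M {\<omega> \<in> space M. X i \<omega> = 1} = p"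
    and "\<And>i. i \<ge> 1 \<Longrightarrow> measure M {\<omega> \<in> space M. X i \<omega> = -1} = q"
    and "z > 0"
  shows "\<exists>u0 > 0. \<exists>c1 > 0. \<exists>c2 > 0. \<forall>u::real \<ge> u0. \<forall>n::nat. real n \<ge> u\<^sup>2 \<longrightarrow>
     (let h = q / p;
          \<theta> = - ln ((2 * q + h powr (real z / 2)) / (1 + h powr (real z / 2)))
      in c1 * exp (- \<theta> * u)
           \<le> measure M {\<omega> \<in> space M. real (Xi X {0, int z} n \<omega>) \<ge> u}
         \<and> measure M {\<omega> \<in> space M. real (Xi X {0, int z} n \<omega>) \<ge> u}
           \<le> measure M {\<omega> \<in> space M. ereal_of_enat (Xi_inf X {0, int z} \<omega>) \<ge> ereal u}
         \<and> measure M {\<omega> \<in> space M. ereal_of_enat (Xi_inf X {0, int z} \<omega>) \<ge> ereal u}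
           \<le> c2 * exp (- \<theta> * u))"
proof -
  interpret prob_space M by (rule assms(1))
  interpret rwalk M X p q using assms by unfold_locales auto
  have q0: "0 < q" and p0: "0 < p" and pq: "p + q = 1" and z: "z > 0" using assms by auto
  define h where "h = q / p"
  define r where "r = sqrt h"
  define lam where "lam = (2*q + r^z)/(1 + r^z)"
  define rho where "rho = p*r + q/r"
  have h0: "0 < h" "h < 1" using assms by (auto simp: h_def)
  have r0: "0 < r" "r < 1" using h0 by (auto simp: r_def)
  have r2: "r^2 = h" using h0 by (simp add: r_def)
  have hr: "p * r^2 = q" using p0 by (simp add: r2 h_def)
  have rz: "0 < r^z" "r^z \<le> 1" using r0 by (auto simp: power_le_one)
  have q2: "2*q < 1" using assms by simp
  have lam0: "0 < lam" using rz q0 by (simp add: lam_def)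
  have lam1: "lam < 1" using rz q2 by (simp add: lam_def)
  have hz: "h powr (real z / 2) = r^z"
  proof -
    have "h powr (real z / 2) = (h powr (1/2)) powr (real z)" by (simp add: powr_powr)
    also have "\<dots> = r powr real z" using h0 by (simp add: powr_half_sqrt r_def)
    also have "\<dots> = r^z" using r0 by (simp add: powr_realpow)
    finally show ?thesis .
  qed
  have qr: "2*q < r"
  proof -
    have "(p - q)^2 > 0" using assms by simp
    moreover have "(p+q)^2 = (p-q)^2 + 4*p*q" by (simp add: power2_eq_square algebra_simps)
    moreover have "(p+q)^2 = 1" using pq by simp
    ultimately have pq4: "4*p*q < 1" by linarith
    have "(2*q)^2 = q * (4*p*q) / p" using p0 by (simp add: power2_eq_square)
    also have "\<dots> < q * 1 / p" using pq4 p0 q0 by (intro divide_strict_right_mono mult_strict_left_mono) auto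
    finally have "(2*q)^2 < h" by (simp add: h_def)
    then show ?thesis unfolding r_def by (rule real_less_rsqrt)
  qed
  have rho0: "0 < rho" using p0 q0 r0 unfolding rho_def by (intro add_pos_pos mult_pos_pos divide_pos_pos)
  have rho1: "rho < 1"
  proof -
    have "rho * r = p*r^2 + q" using r0 by (simp add: rho_def field_simps power2_eq_square)
    also have "\<dots> = 2*q" using hr by simp
    also have "\<dots> < 1 * r" using qr by simp
    finally show ?thesis using r0 by (simp add: mult_less_cancel_right)
  qed
  interpret W: walkpar p q r lam z
    using r0 pq hr z lam0 lam1 p0 q0 by unfold_locales (auto simp: lam_def)
  define \<delta> where "\<delta> = r^z * lam^2 / 2"
  have d0: "0 < \<delta>" using rz lam0 by (simp add: \<delta>_def)
  have d1: "\<delta> < 1"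
  proof -
    have "lam * lam < 1 * 1" by (rule mult_strict_mono) (use lam0 lam1 in auto)
    then have "lam^2 < 1" by (simp add: power2_eq_square)
    then have "r^z * lam^2 < 1 * 1" using rz by (intro mult_le_less_imp_less) auto
    then show ?thesis by (simp add: \<delta>_def)
  qed
  define u0 where "u0 = max 1 (ln (\<delta>*lam) / ln rho)"
  have theta: "exp (- (- ln ((2 * q + h powr (real z / 2)) / (1 + h powr (real z / 2)))) * u) = lam powr u" for u
  proof -
    have X: "(2 * q + h powr (real z / 2)) / (1 + h powr (real z / 2)) = lam" by (simp only: hz lam_def)
    show ?thesis unfolding X using lam0 by (simp add: powr_def mult.commute)
  qed
  have main: "lam/2 * lam powr u \<le> prob {\<omega> \<in> space M. real (Xi X {0, int z} n \<omega>) \<ge> u}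
         \<and> prob {\<omega> \<in> space M. real (Xi X {0, int z} n \<omega>) \<ge> u}
           \<le> prob {\<omega> \<in> space M. ereal_of_enat (Xi_inf X {0, int z} \<omega>) \<ge> ereal u}
         \<and> prob {\<omega> \<in> space M. ereal_of_enat (Xi_inf X {0, int z} \<omega>) \<ge> ereal u}
           \<le> 1/r^z * lam powr u"
    if u: "u \<ge> u0" and n: "real n \<ge> u^2" for u n
  proof -
    have u1: "u \<ge> 1" using u by (simp add: u0_def)
    define m where "m = nat \<lceil>u\<rceil>"
    define G where "G k = {\<omega> \<in> space M. m \<le> vis {0, int z} (tr X k \<omega>)}" for k
    define S where "S k = (\<Sum>xs\<in>{xs\<in>LL k. m \<le> vis {0,int z} xs}. wt p q xs)" for k
    have En: "{\<omega> \<in> space M. real (Xi X {0, int z} k \<omega>) \<ge> u} = G k" for k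
    proof -
      have upos: "u > 0" using u1 by simp
      show ?thesis unfolding G_def by (simp only: fin_event[OF upos] m_def[symmetric] vis_tr[OF z])
    qed
    have PG: "prob (G k) = S k" for k unfolding G_def S_def by (rule prob_event)
    have Ginf: "{\<omega> \<in> space M. ereal_of_enat (Xi_inf X {0, int z} \<omega>) \<ge> ereal u} = (\<Union>k. G k)"
    proof -
      have upos: "u > 0" using u1 by simp
      show ?thesis unfolding G_def by (auto simp only: inf_event[OF z upos] m_def[symmetric] vis_tr[OF z])
    qed
    have Gev: "G k \<in> events" for k unfolding G_def by (rule ev_tr)
    have Ginc: "incseq G"
      by (rule incseq_SucI) (auto simp: G_def)
    have mu: "real m \<ge> u" "real m \<le> u + 1" using u1 by (auto simp: m_def)
    have Lup: "lam^m \<le> lam powr u"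
    proof -
      have "lam^m = lam powr real m" using lam0 by (simp add: powr_realpow)
      also have "\<dots> \<le> lam powr u" using mu lam0 lam1 by (intro powr_mono') auto
      finally show ?thesis .
    qed
    have Llow: "lam * lam powr u \<le> lam^m"
    proof -
      have "lam * lam powr u = lam powr (u + 1)" using lam0 by (simp add: powr_add)
      also have "\<dots> \<le> lam powr real m" using mu lam0 lam1 by (intro powr_mono') auto
      also have "\<dots> = lam^m" using lam0 by (simp add: powr_realpow)
      finally show ?thesis .
    qed
    have Sup: "S k \<le> 1/r^z * lam powr u" for k
    proof -
      have "S k \<le> lam^m / r^z" unfolding S_def by (rule W.comb_upper)
      also have "\<dots> \<le> lam powr u / r^z" using Lup rz by (simp add: divide_right_mono)
      finally show ?thesis by simp
    qed
    have Pinf: "prob (\<Union>k. G k) \<le> 1/r^z * lam powr u"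
    proof -
      have "(\<lambda>k. prob (G k)) \<longlonglongrightarrow> prob (\<Union>k. G k)"
        using Gev Ginc by (intro finite_Lim_measure_incseq) auto
      then show ?thesis by (rule LIMSEQ_le_const2) (use PG Sup in auto)
    qed
    have mid: "prob (G n) \<le> prob (\<Union>k. G k)"
      using Gev by (intro finite_measure_mono) auto
    have low: "lam/2 * lam powr u \<le> S n"
    proof -
      let ?E = "lam powr u"
      have E0: "0 \<le> ?E" by simp
      have rhou: "rho powr u \<le> \<delta> * lam"
      proof -
        have lnr: "ln rho < 0" using rho0 rho1 by simp
        have "ln (\<delta>*lam) / ln rho \<le> u" using u by (simp add: u0_def)
        then have "u * ln rho \<le> ln (\<delta>*lam)" using lnr by (simp add: neg_divide_le_eq)
        then have "exp (u * ln rho) \<le> exp (ln (\<delta>*lam))" by simp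
        then show ?thesis using rho0 d0 lam0 by (simp add: powr_def)
      qed
      have rhon: "rho^n \<le> \<delta> * ?E"
      proof -
        have "rho^n = rho powr real n" using rho0 by (simp add: powr_realpow)
        also have "\<dots> \<le> rho powr (u*u)" using n rho0 rho1 by (intro powr_mono') (auto simp: power2_eq_square)
        also have "\<dots> = (rho powr u) powr u" by (simp add: powr_powr)
        also have "\<dots> \<le> (\<delta>*lam) powr u" using rhou u1 by (intro powr_mono2) auto
        also have "\<dots> = \<delta> powr u * ?E" by (simp add: powr_mult)
        also have "\<dots> \<le> \<delta> * ?E"
        proof (intro mult_right_mono E0)
          have "\<delta> powr u \<le> \<delta> powr 1" using u1 d0 d1 by (intro powr_mono') auto
          then show "\<delta> powr u \<le> \<delta>" using d0 by simp
        qed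
        finally show ?thesis .
      qed
      have cl: "lam \<le> (1/lam)^m * lam * S n + (1/lam)^m * rho^n / r^z"
        unfolding S_def rho_def by (rule W.comb_lower)
      then have "lam^m * lam \<le> lam^m * ((1/lam)^m * lam * S n + (1/lam)^m * rho^n / r^z)"
        using lam0 by (intro mult_left_mono) auto
      also have "\<dots> = lam * S n + rho^n / r^z"
        using lam0 by (simp add: field_simps power_one_over)
      finally have A: "lam^m * lam \<le> lam * S n + rho^n / r^z" .
      have B: "rho^n / r^z \<le> lam^2 * ?E / 2"
      proof -
        have "rho^n / r^z \<le> \<delta> * ?E / r^z" using rhon rz by (simp add: divide_right_mono)
        also have "\<dots> = lam^2 * ?E / 2" using rz r0 by (simp add: \<delta>_def field_simps)
        finally show ?thesis .
      qed
      have C: "lam * ?E * lam \<le> lam^m * lam" using Llow lam0 by (intro mult_right_mono) auto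
      have "lam * (lam/2 * ?E) \<le> lam * S n"
        using A B C by (simp add: power2_eq_square algebra_simps)
      then show ?thesis using lam0 by simp
    qed
    show ?thesis
      unfolding En Ginf PG using low mid Pinf PG by simp
  qed
  have final: "\<forall>u::real \<ge> u0. \<forall>n::nat. real n \<ge> u\<^sup>2 \<longrightarrow>
     (let h = q / p;
          \<theta> = - ln ((2 * q + h powr (real z / 2)) / (1 + h powr (real z / 2)))
      in lam/2 * exp (- \<theta> * u)
           \<le> measure M {\<omega> \<in> space M. real (Xi X {0, int z} n \<omega>) \<ge> u}
         \<and> measure M {\<omega> \<in> space M. real (Xi X {0, int z} n \<omega>) \<ge> u}
           \<le> measure M {\<omega> \<in> space M. ereal_of_enat (Xi_inf X {0, int z} \<omega>) \<ge> ereal u}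
         \<and> measure M {\<omega> \<in> space M. ereal_of_enat (Xi_inf X {0, int z} \<omega>) \<ge> ereal u}
           \<le> 1/r^z * exp (- \<theta> * u))"
    unfolding Let_def h_def[symmetric] theta using main by blast
  show ?thesis
    apply (rule exI[of _ u0], rule conjI, simp add: u0_def)
    apply (rule exI[of _ "lam/2"], rule conjI, simp add: lam0)
    apply (rule exI[of _ "1/r^z"], rule conjI, simp add: rz)
    by (rule final)
qed


end
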